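(* Let $(\Sigma_+,\Sigma_-,N_1,N_2,N_3)$ be a solution, defined for all $\tau\in\mathbb{R}$, of the Wainwright–Hsu system (described in the context) satisfying the constraint, with $N_1<0$ and $N_2,N_3>0$. Then $$\lim_{\tau\to\infty}N_1=0,\quad \lim_{\tau\to\infty}N_2=\infty,\quad \lim_{\tau\to\infty}N_3=\infty,\quad \lim_{\tau\to\infty}\Sigma_+=\tfrac12,\quad \lim_{\tau\to\infty}\Sigma_-=0,$$ $$\lim_{\tau\to\infty}N_1(N_2+N_3)=-\tfrac12,\qquad \lim_{\tau\to\infty}(N_2-N_3)=0.$$
   Context: Wainwright–Hsu system: for functions $N_1,N_2,N_3,\Sigma_+,\Sigma_-$ of $\tau\in\mathbb{R}$ (prime denotes $d/d\tau$), $N_1'=(q-4\Sigma_+)N_1$, $N_2'=(q+2\Sigma_++2\sqrt3\Sigma_-)N_2$, $N_3'=(q+2\Sigma_+-2\sqrt3\Sigma_-)N_3$, $\Sigma_+'=-(2-q)\Sigma_+-3S_+$, $\Sigma_-'=-(2-q)\Sigma_--3S_-$, where $q=2(\Sigma_+^2+\Sigma_-^2)$, $S_+=\frac12[(N_2-N_3)^2-N_1(2N_1-N_2-N_3)]$, $S_-=\frac{\sqrt3}{2}(N_3-N_2)(N_1-N_2-N_3)$, together with the constraint $\Sigma_+^2+\Sigma_-^2+\frac34[N_1^2+N_2^2+N_3^2-2(N_1N_2+N_2N_3+N_1N_3)]=1$ (which is preserved by the flow). The signs of each $N_i$ (positive, negative, zero) are preserved by the flow. Solutions with these sign conditions (Bianchi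 VIII) exist for all $\tau\in\mathbb{R}$. *)

theory Defs
  imports "HOL-Analysis.Analysis"
begin

definition wh_q :: "real \<Rightarrow> real \<Rightarrow> real" where
  "wh_q sp sm = 2 * (sp^2 + sm^2)"

definition wh_Splus :: "real \<Rightarrow> real \<Rightarrow> real \<Rightarrow> real" where
  "wh_Splus n1 n2 n3 = (1/2) * ((n2 - n3)^2 - n1 * (2*n1 - n2 - n3))"

definition wh_Sminus :: "real \<Rightarrow> real \<Rightarrow> real \<Rightarrow> real" where
  "wh_Sminus n1 n2 n3 = (sqrt 3 / 2) * (n3 - n2) * (n1 - n2 - n3)"

definition wh_solution ::
  "(real \<Rightarrow> real) \<Rightarrow> (real \<Rightarrow> real) \<Rightarrow> (real \<Rightarrow> real) \<Rightarrow> (real \<Rightarrow> real) \<Rightarrow> (real \<Rightarrow> real) \<Rightarrow> bool" where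
  "wh_solution N1 N2 N3 Sp Sm \<longleftrightarrow> (\<forall>t.
     (N1 has_real_derivative ((wh_q (Sp t) (Sm t) - 4 * Sp t) * N1 t)) (at t) \<and>
     (N2 has_real_derivative ((wh_q (Sp t) (Sm t) + 2 * Sp t + 2 * sqrt 3 * Sm t) * N2 t)) (at t) \<and>
     (N3 has_real_derivative ((wh_q (Sp t) (Sm t) + 2 * Sp t - 2 * sqrt 3 * Sm t) * N3 t)) (at t) \<and>
     (Sp has_real_derivative (- (2 - wh_q (Sp t) (Sm t)) * Sp t - 3 * wh_Splus (N1 t) (N2 t) (N3 t))) (at t) \<and>
     (Sm has_real_derivative (- (2 - wh_q (Sp t) (Sm t)) * Sm t - 3 * wh_Sminus (N1 t) (N2 t) (N3 t))) (at t))"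

definition wh_constraint :: "real \<Rightarrow> real \<Rightarrow> real \<Rightarrow> real \<Rightarrow> real \<Rightarrow> bool" where
  "wh_constraint n1 n2 n3 sp sm \<longleftrightarrow>
     sp^2 + sm^2 + (3/4) * (n1^2 + n2^2 + n3^2 - 2 * (n1*n2 + n2*n3 + n1*n3)) = 1"

end

theory Submission
  imports Defs
begin


lemma deriv_eq_aux: "(f has_real_derivative a) F \<Longrightarrow> a = b \<Longrightarrow> (f has_real_derivative b) F" by simp

lemma mono_up:
  fixes f f' :: "real \<Rightarrow> real"
  assumes d: "\<And>t. (f has_real_derivative f' t) (at t)" and "a \<le> b"
    and p: "\<And>t. a \<le> t \<Longrightarrow> t \<le> b \<Longrightarrow> f' t \<ge> 0"
  shows "f a \<le> f b"
  by (rule DERIV_nonneg_imp_nondecreasing[OF \<open>a \<le> b\<close>]) (use d p in blast)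

lemma mono_down:
  fixes f f' :: "real \<Rightarrow> real"
  assumes d: "\<And>t. (f has_real_derivative f' t) (at t)" and "a \<le> b"
    and p: "\<And>t. a \<le> t \<Longrightarrow> t \<le> b \<Longrightarrow> f' t \<le> 0"
  shows "f b \<le> f a"
  by (rule DERIV_nonpos_imp_nonincreasing[OF \<open>a \<le> b\<close>]) (use d p in blast)

lemma barrier_upper:
  fixes f f' :: "real \<Rightarrow> real"
  assumes d: "\<And>t. (f has_real_derivative f' t) (at t)"
    and fa: "f a \<le> c" and bar: "\<And>t. a \<le> t \<Longrightarrow> f t = c \<Longrightarrow> f' t < 0" and ab: "a \<le> b"
  shows "f b \<le> c"
proof (rule ccontr)
  assume nb: "\<not> f b \<le> c"
  have cont: "continuous_on UNIV f"
    using d by (meson DERIV_isCont continuous_at_imp_continuous_on)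
  let ?S = "{a..b} \<inter> {t. f t \<le> c}"
  have "closed {t. f t \<le> c}"
    using cont by (intro closed_Collect_le) (auto intro: continuous_intros)
  hence cS: "compact ?S" by (intro compact_Int_closed) auto
  have "a \<in> ?S" using fa ab by auto
  then obtain t2 where t2: "t2 \<in> ?S" and mx: "\<And>y. y \<in> ?S \<Longrightarrow> y \<le> t2"
    using compact_attains_sup[OF cS] by blast
  have ft2: "f t2 \<le> c" "a \<le> t2" "t2 \<le> b" using t2 by auto
  have "t2 \<noteq> b" using ft2 nb by auto
  with ft2 have lt: "t2 < b" by auto
  obtain t3 where t3: "t2 \<le> t3" "t3 \<le> b" "f t3 = c"
    using IVT'[of f t2 c b] ft2 nb lt cont
    by (meson continuous_on_subset less_imp_le linorder_not_le subset_UNIV)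
  have "t3 \<in> ?S" using t3 ft2 by auto
  hence "t3 = t2" using mx t3 by force
  hence fc: "f t2 = c" using t3 by simp
  obtain dd where dd: "dd > 0" "\<And>h. h > 0 \<Longrightarrow> h < dd \<Longrightarrow> f (t2 + h) < f t2"
    using DERIV_neg_dec_right[OF d bar[OF ft2(2) fc]] by blast
  define h where "h = min dd (b - t2) / 2"
  have h: "h > 0" "h < dd" "t2 + h \<le> b" using dd lt unfolding h_def by (auto simp: min_def field_simps)
  have "t2 + h \<in> ?S" using dd(2)[OF h(1,2)] fc h ft2 by auto
  thus False using mx h by fastforce
qed

lemma barrier_lower:
  fixes f f' :: "real \<Rightarrow> real"
  assumes d: "\<And>t. (f has_real_derivative f' t) (at t)"
    and fa: "f a \<ge> c" and bar: "\<And>t. a \<le> t \<Longrightarrow> f t = c \<Longrightarrow> f' t > 0" and ab: "a \<le> b"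
  shows "f b \<ge> c"
proof -
  have "(\<lambda>t. - f t) b \<le> - c"
    by (rule barrier_upper[where f' = "\<lambda>t. - f' t"])
       (use d fa bar ab in \<open>auto intro: derivative_intros\<close>)
  thus ?thesis by simp
qed

lemma decay:
  fixes W Wd Q :: "real \<Rightarrow> real"
  assumes d: "\<And>t. (W has_real_derivative Wd t) (at t)"
    and b: "\<And>t. t \<ge> T \<Longrightarrow> Wd t \<le> - k * Q t ^ 2" and k: "k > 0" and Qn: "\<And>t. Q t \<ge> 0"
    and lim: "((\<lambda>t. W t - Q t) \<longlongrightarrow> 0) at_top"
  shows "(Q \<longlongrightarrow> 0) at_top"
proof (rule tendstoI)
  fix e :: real assume e: "e > 0"
  define dl where "dl = e/4"
  have dl: "dl > 0" using e by (simp add: dl_def)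
  have "eventually (\<lambda>t. dist (W t - Q t) 0 < dl) at_top" by (rule tendstoD[OF lim dl])
  then obtain T2 where T2: "\<And>t. t \<ge> T2 \<Longrightarrow> \<bar>W t - Q t\<bar> < dl"
    by (auto simp: eventually_at_top_linorder dist_real_def)
  define T3 where "T3 = max T T2"
  define L where "L = (W T3 + dl) / (k * dl^2) + 1"
  have WT3: "W T3 + dl \<ge> 0" using T2[of T3] Qn[of T3] unfolding T3_def by auto
  have kd: "k * dl^2 > 0" using k dl by simp
  have Le0: "k*dl^2 * ((W T3 + dl) / (k*dl^2)) = W T3 + dl" using kd by (intro times_divide_eq_right[THEN trans] nonzero_mult_div_cancel_left) auto
  have Le: "k*dl^2*L = (W T3 + dl) + k*dl^2" using Le0 unfolding L_def by (simp only: distrib_left mult_1_right)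
  have "(W T3 + dl) / (k * dl^2) \<ge> 0" using WT3 kd by simp
  hence L: "L > 0" "k * dl^2 * L > W T3 + dl" using Le kd unfolding L_def by auto
  have "\<exists>t1. T3 \<le> t1 \<and> Q t1 \<le> dl"
  proof (rule ccontr)
    assume "\<not> ?thesis"
    hence big: "\<And>t. T3 \<le> t \<Longrightarrow> Q t > dl" by force
    have "(\<lambda>t. W t + k * dl^2 * t) (T3 + L) \<le> (\<lambda>t. W t + k * dl^2 * t) T3"
    proof (rule mono_down[where f = "\<lambda>t. W t + k * dl^2 * t" and f' = "\<lambda>t. Wd t + k * dl^2"])
      fix t show "((\<lambda>t. W t + k * dl^2 * t) has_real_derivative Wd t + k * dl^2) (at t)"
        by (rule deriv_eq_aux[OF DERIV_add[OF d DERIV_cmult[OF DERIV_ident]]]) simp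
    next
      show "T3 \<le> T3 + L" using L by simp
    next
      fix t assume t: "T3 \<le> t" "t \<le> T3 + L"
      have "Q t > dl" using big t by auto
      hence "Q t ^2 \<ge> dl^2" using dl by (intro power_mono) auto
      hence "k * Q t^2 \<ge> k * dl^2" using k by simp
      moreover have "Wd t \<le> - k * Q t ^ 2" using b t unfolding T3_def by auto
      ultimately show "Wd t + k * dl^2 \<le> 0" by linarith
    qed
    hence "W (T3 + L) \<le> W T3 - k * dl^2 * L" by (simp add: algebra_simps)
    hence "W (T3 + L) < - dl" using L by linarith
    moreover have "\<bar>W (T3 + L) - Q (T3 + L)\<bar> < dl" using T2 L unfolding T3_def by auto
    ultimately show False using Qn[of "T3 + L"] by linarith
  qed
  then obtain t1 where t1: "T3 \<le> t1" "Q t1 \<le> dl" by blast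
  show "eventually (\<lambda>t. dist (Q t) 0 < e) at_top"
    unfolding eventually_at_top_linorder
  proof (intro exI allI impI)
    fix t assume t: "t1 \<le> t"
    have "W t \<le> W t1"
    proof (rule mono_down[OF d t])
      fix s assume "t1 \<le> s"
      hence "Wd s \<le> - k * Q s ^ 2" using b t1 unfolding T3_def by auto
      moreover have "k * Q s ^2 \<ge> 0" using k by simp
      ultimately show "Wd s \<le> 0" by linarith
    qed
    moreover have "\<bar>W t - Q t\<bar> < dl" "\<bar>W t1 - Q t1\<bar> < dl" using T2 t t1 unfolding T3_def by auto
    ultimately have "Q t < 3 * dl" using t1 by linarith
    thus "dist (Q t) 0 < e" using Qn[of t] unfolding dl_def by simp
  qed
qed




lemma ineq1:
  fixes s m c :: real
  assumes "s^2 + m^2 \<le> 1" "c \<ge> 0"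
  shows "(1 - 2* s)*(1 - s^2 - m^2) - 3*m^2 - 2*c*\<bar>m\<bar> \<ge> 3/4 - (33 + 8*c^2)*(s^2 + m^2)"
proof -
  have a: "\<bar>2* s*(1 - s^2 - m^2)\<bar> \<le> 2*\<bar>s\<bar>"
    using assms by (simp add: abs_mult mult_left_le)
  have b: "4*\<bar>s\<bar> \<le> 1/8 + 32* s^2"
    using zero_le_square[of "\<bar>s\<bar> - 1/16"] by (simp add: power2_eq_square algebra_simps)
  have c: "2*c*\<bar>m\<bar> \<le> 1/8 + 8*c^2*m^2"
    using zero_le_square[of "c*\<bar>m\<bar> - 1/8"] by (simp add: power2_eq_square algebra_simps)
  have d: "(1 - 2* s)*(1 - s^2 - m^2) = (1 - s^2 - m^2) - 2* s*(1 - s^2 - m^2)" by (simp add: algebra_simps)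
  have e: "c^2*m^2 \<le> c^2*(s^2+m^2)" by (simp add: mult_left_mono)
  have f: "(33 + 8*c^2)*(s^2 + m^2) = 33* s^2 + 33*m^2 + 8*(c^2*m^2) + 8*(c^2* s^2)" by (simp add: algebra_simps)
  have g: "c^2* s^2 \<ge> 0" "\<bar>s\<bar> \<ge> 0" "m^2 \<ge> 0" "s^2 \<ge> 0" by auto
  show ?thesis using a b c d f g by (simp only: abs_le_iff) linarith
qed

lemma r3sq: "sqrt 3 * sqrt 3 = (3::real)" by simp
lemma deriv_eq: "(f has_real_derivative a) F \<Longrightarrow> a = b \<Longrightarrow> (f has_real_derivative b) F" by simp

locale whs =
  fixes N1 N2 N3 Sp Sm :: "real \<Rightarrow> real"
  assumes sol: "wh_solution N1 N2 N3 Sp Sm"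
    and cons: "\<forall>t. wh_constraint (N1 t) (N2 t) (N3 t) (Sp t) (Sm t)"
    and sign: "\<forall>t. N1 t < 0 \<and> N2 t > 0 \<and> N3 t > 0"
begin

definition "qq t = 2*(Sp t^2 + Sm t^2)"
definition "xx t = N2 t + N3 t"
definition "yy t = N2 t - N3 t"
definition "YY t = sqrt 3 / 2 * yy t"
definition "ww t = - N1 t * xx t"
definition "PP t = Sm t * YY t"
definition "EE t = Sm t^2 + YY t^2"
definition "DD t = Sm t^2 - YY t^2"
definition "MM t = - N1 t * N2 t * N3 t"

lemma n_neg: "N1 t < 0" and a_pos: "N2 t > 0" and b_pos: "N3 t > 0"
  using sign by auto

lemma x_pos: "xx t > 0" using a_pos[of t] b_pos[of t] by (simp add: xx_def)
lemma w_pos: "ww t > 0" using n_neg x_pos by (simp add: ww_def mult_neg_pos)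

lemma YYsq: "YY t ^2 = 3/4 * yy t^2"
  by (simp add: YY_def power_mult_distrib power_divide)

lemma con: "Sp t^2 + Sm t^2 + YY t^2 + 3/4 * N1 t^2 + 3/2 * ww t = 1"
proof -
  have "wh_constraint (N1 t) (N2 t) (N3 t) (Sp t) (Sm t)" using cons by auto
  thus ?thesis unfolding wh_constraint_def YYsq ww_def xx_def yy_def
    by (simp add: algebra_simps power2_eq_square)
qed

lemma dN1: "(N1 has_real_derivative (qq t - 4*Sp t) * N1 t) (at t)"
  using sol unfolding wh_solution_def wh_q_def qq_def by blast
lemma dN2: "(N2 has_real_derivative (qq t + 2*Sp t + 2 * sqrt 3 * Sm t) * N2 t) (at t)"
  using sol unfolding wh_solution_def wh_q_def qq_def by blast
lemma dN3: "(N3 has_real_derivative (qq t + 2*Sp t - 2 * sqrt 3 * Sm t) * N3 t) (at t)"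
  using sol unfolding wh_solution_def wh_q_def qq_def by blast

definition "sd t = -2*(1+Sp t)*YY t^2 + (3 - 3/2*Sp t)*N1 t^2 + 3/2*(1-2*Sp t)*ww t"

lemma dSp: "(Sp has_real_derivative sd t) (at t)"
proof -
  have d: "(Sp has_real_derivative (- (2 - qq t) * Sp t - 3 * wh_Splus (N1 t) (N2 t) (N3 t))) (at t)"
    using sol unfolding wh_solution_def wh_q_def qq_def by blast
  have "- (2 - qq t) * Sp t - 3 * wh_Splus (N1 t) (N2 t) (N3 t) = sd t"
    using con[of t] unfolding sd_def wh_Splus_def qq_def YYsq ww_def xx_def yy_def
    by algebra
  thus ?thesis using d by simp
qed

definition "md t = -(2 - qq t)*Sm t - 3*YY t*(xx t - N1 t)"
lemma dSm: "(Sm has_real_derivative md t) (at t)"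
proof -
  have d: "(Sm has_real_derivative (- (2 - qq t) * Sm t - 3 * wh_Sminus (N1 t) (N2 t) (N3 t))) (at t)"
    using sol unfolding wh_solution_def wh_q_def qq_def by blast
  have "- (2 - qq t) * Sm t - 3 * wh_Sminus (N1 t) (N2 t) (N3 t) = md t"
    unfolding md_def wh_Sminus_def YY_def xx_def yy_def by (simp add: algebra_simps)
  thus ?thesis using d by simp
qed

definition "xd t = (qq t + 2*Sp t)*xx t + 4*PP t"
lemma dxx: "(xx has_real_derivative xd t) (at t)"
proof -
  have "(xx has_real_derivative ((qq t + 2*Sp t + 2 * sqrt 3 * Sm t) * N2 t + (qq t + 2*Sp t - 2 * sqrt 3 * Sm t) * N3 t)) (at t)"
    unfolding xx_def[abs_def] by (intro derivative_intros dN2 dN3)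
  moreover have "(qq t + 2*Sp t + 2 * sqrt 3 * Sm t) * N2 t + (qq t + 2*Sp t - 2 * sqrt 3 * Sm t) * N3 t = xd t"
    unfolding xd_def PP_def YY_def xx_def yy_def by algebra
  ultimately show ?thesis by simp
qed

definition "Yd t = (qq t + 2*Sp t)*YY t + 3*Sm t*xx t"
lemma dYY: "(YY has_real_derivative Yd t) (at t)"
proof -
  have "(YY has_real_derivative (sqrt 3/2 * ((qq t + 2*Sp t + 2 * sqrt 3 * Sm t) * N2 t - (qq t + 2*Sp t - 2 * sqrt 3 * Sm t) * N3 t))) (at t)"
    unfolding YY_def[abs_def] yy_def by (rule DERIV_cmult[OF DERIV_diff[OF dN2 dN3]])
  moreover have "sqrt 3/2 * ((qq t + 2*Sp t + 2 * sqrt 3 * Sm t) * N2 t - (qq t + 2*Sp t - 2 * sqrt 3 * Sm t) * N3 t) = Yd t"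
    unfolding Yd_def YY_def xx_def yy_def by (simp add: field_simps)
  ultimately show ?thesis by simp
qed

lemma dMM: "(MM has_real_derivative 3 * qq t * MM t) (at t)"
  unfolding MM_def[abs_def]
  by (rule deriv_eq[OF DERIV_mult[OF DERIV_mult[OF DERIV_minus[OF dN1] dN2] dN3]]) algebra

lemma M_pos: "MM t > 0" using n_neg[of t] a_pos[of t] b_pos[of t] unfolding MM_def
  by (simp add: mult_neg_pos mult_pos_pos)

lemma q_nonneg: "qq t \<ge> 0" unfolding qq_def by simp

lemma bnds: "Sp t^2 \<le> 1" "Sm t^2 \<le> 1" "YY t^2 \<le> 1" "ww t \<le> 2/3" "N1 t^2 \<le> 4/3"
  "Sp t^2 + Sm t^2 \<le> 1" "EE t \<le> 1" "Sp t < 1" "Sp t \<ge> -1"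
proof -
  have c: "Sp t^2 + Sm t^2 + YY t^2 + 3/4 * N1 t^2 + 3/2 * ww t = 1" by (rule con)
  have w: "ww t > 0" by (rule w_pos)
  have p: "Sp t^2 \<ge> 0" "Sm t^2 \<ge> 0" "YY t^2 \<ge> 0" "N1 t^2 \<ge> 0" by auto
  show "Sp t^2 \<le> 1" "Sm t^2 \<le> 1" "YY t^2 \<le> 1" "ww t \<le> 2/3" "N1 t^2 \<le> 4/3"
    "Sp t^2 + Sm t^2 \<le> 1" "EE t \<le> 1" using c w p unfolding EE_def by linarith+
  have "Sp t^2 < 1" using c w p by linarith
  hence "\<bar>Sp t\<bar> < 1" by (simp add: abs_square_less_1)
  thus "Sp t < 1" "Sp t \<ge> -1" by auto
qed

lemma M_le: "MM t \<le> xx t / 6"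
proof -
  have "MM t = ww t * (N2 t * N3 t) / xx t" using x_pos[of t] unfolding MM_def ww_def by (simp add: field_simps)
  also have "\<dots> \<le> (2/3) * (xx t^2/4) / xx t"
  proof -
    have h: "0 \<le> (N2 t - N3 t)^2" by simp
    have "N2 t * N3 t \<le> xx t^2/4" using h unfolding xx_def by (simp add: power2_eq_square algebra_simps)
    moreover have "N2 t * N3 t \<ge> 0" using a_pos[of t] b_pos[of t] by simp
    ultimately have "ww t * (N2 t * N3 t) \<le> (2/3) * (xx t^2/4)" using bnds(4)[of t] w_pos[of t]
      by (intro mult_mono) auto
    thus ?thesis using x_pos[of t] by (intro divide_right_mono) auto
  qed
  also have "\<dots> = xx t / 6" using x_pos[of t] by (simp add: power2_eq_square field_simps)
  finally show ?thesis .
qed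

lemma sd_alt: "sd t = (1 - 2*Sp t)*(1 - Sp t^2 - Sm t^2) - 3*YY t^2 + 9/4*N1 t^2"
  using con[of t] unfolding sd_def by algebra

lemma P_abs: "\<bar>PP t\<bar> \<le> \<bar>Sm t\<bar>" "\<bar>PP t\<bar> \<le> 1/2" "\<bar>YY t\<bar> \<le> 1" "\<bar>Sm t\<bar> \<le> 1"
proof -
  have y: "\<bar>YY t\<bar> \<le> 1" using bnds(3)[of t] by (simp add: abs_square_le_1)
  show "\<bar>PP t\<bar> \<le> \<bar>Sm t\<bar>" unfolding PP_def abs_mult using y
    by (simp add: mult_left_le)
  have "2 * \<bar>Sm t\<bar> * \<bar>YY t\<bar> \<le> Sm t^2 + YY t^2"
    using zero_le_square[of "\<bar>Sm t\<bar> - \<bar>YY t\<bar>"] by (simp add: power2_eq_square algebra_simps)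
  thus "\<bar>PP t\<bar> \<le> 1/2" using bnds(7)[of t] unfolding PP_def EE_def abs_mult by linarith
  show "\<bar>YY t\<bar> \<le> 1" by (rule y)
  show "\<bar>Sm t\<bar> \<le> 1" using bnds(2)[of t] by (simp add: abs_square_le_1)
qed

definition "x0 = 6 * MM 0"
lemma x0_pos: "x0 > 0" using M_pos[of 0] by (simp add: x0_def)

lemma M_mono: "a \<le> b \<Longrightarrow> MM a \<le> MM b"
  by (rule mono_up[OF dMM]) (auto intro!: mult_nonneg_nonneg less_imp_le[OF M_pos] q_nonneg)

lemma x_lb: "0 \<le> t \<Longrightarrow> x0 \<le> xx t"
  using M_mono[of 0 t] M_le[of t] unfolding x0_def by linarith

definition "Pd t = md t * YY t + Sm t * Yd t"
lemma dPP: "(PP has_real_derivative Pd t) (at t)"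
  unfolding PP_def[abs_def] Pd_def by (rule deriv_eq[OF DERIV_mult[OF dSm dYY]]) simp

definition "FF t = Sp t - PP t / xx t"
definition "Fd t = sd t - (Pd t * xx t - PP t * xd t) / xx t^2"
lemma dFF: "(FF has_real_derivative Fd t) (at t)"
  unfolding FF_def[abs_def] Fd_def
  by (rule deriv_eq[OF DERIV_diff[OF dSp DERIV_divide[OF dPP dxx]]])
     (use x_pos[of t] in \<open>auto simp: power2_eq_square\<close>)

lemma Fd_alt: "Fd t = (1 - 2*Sp t)*(1 - Sp t^2 - Sm t^2) - 3*Sm t^2 + 9/4*N1 t^2
   - 3*N1 t*YY t^2/xx t + (2 - qq t)*PP t/xx t + 4*PP t^2/xx t^2"
proof -
  have x: "xx t \<noteq> 0" using x_pos[of t] by simp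
  show ?thesis unfolding Fd_def sd_alt Pd_def md_def Yd_def xd_def qq_def PP_def
    using x by (simp add: field_simps) algebra
qed

definition "KK = 33 + 8*(1/x0)^2"
lemma KK_pos: "KK > 0" unfolding KK_def by (simp add: add_pos_nonneg)

lemma Fd_lb: assumes "0 \<le> t" shows "Fd t \<ge> 3/4 - KK*(Sp t^2 + Sm t^2)"
proof -
  have x: "xx t > 0" "x0 \<le> xx t" using x_pos[of t] x_lb[OF assms] by auto
  have B: "9/4*N1 t^2 - 3*N1 t*YY t^2/xx t + 4*PP t^2/xx t^2 \<ge> 0"
  proof -
    have "3*N1 t*YY t^2 \<le> 0" using n_neg[of t] by (simp add: mult_nonpos_nonneg)
    hence "- 3*N1 t*YY t^2/xx t \<ge> 0" using x by (simp add: divide_nonpos_pos)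
    moreover have "4*PP t^2/xx t^2 \<ge> 0" by simp
    moreover have "9/4*N1 t^2 \<ge> 0" by simp
    ultimately show ?thesis by linarith
  qed
  have q2: "0 \<le> 2 - qq t" "2 - qq t \<le> 2" using bnds(6)[of t] q_nonneg[of t] unfolding qq_def by auto
  have "\<bar>(2 - qq t)*PP t/xx t\<bar> \<le> 2 * \<bar>Sm t\<bar> / x0"
  proof -
    have "\<bar>(2 - qq t)*PP t/xx t\<bar> = (2 - qq t)*\<bar>PP t\<bar>/xx t" using q2 x by (simp add: abs_mult)
    also have "\<dots> \<le> 2*\<bar>Sm t\<bar>/xx t" using q2 x P_abs(1)[of t]
      by (intro divide_right_mono mult_mono) auto
    also have "\<dots> \<le> 2*\<bar>Sm t\<bar>/x0" using x x0_pos by (intro divide_left_mono) auto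
    finally show ?thesis .
  qed
  hence C: "(2 - qq t)*PP t/xx t \<ge> - (2 * (1/x0) * \<bar>Sm t\<bar>)" by (simp only: abs_le_iff) simp
  have D: "(1 - 2*Sp t)*(1 - Sp t^2 - Sm t^2) - 3*Sm t^2 - 2*(1/x0)*\<bar>Sm t\<bar> \<ge> 3/4 - KK*(Sp t^2 + Sm t^2)"
    unfolding KK_def by (rule ineq1) (use bnds(6)[of t] x0_pos in auto)
  show ?thesis unfolding Fd_alt using B C D by linarith
qed

lemma F_abs: "0 \<le> t \<Longrightarrow> \<bar>FF t\<bar> \<le> 1 + 1/x0"
proof -
  assume t: "0 \<le> t"
  have x: "xx t > 0" "x0 \<le> xx t" using x_pos[of t] x_lb[OF t] by auto
  have "\<bar>PP t / xx t\<bar> \<le> 1/x0"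
  proof -
    have "\<bar>PP t / xx t\<bar> = \<bar>PP t\<bar> / xx t" using x by simp
    also have "\<dots> \<le> 1 / xx t" using P_abs(2)[of t] x by (intro divide_right_mono) auto
    also have "\<dots> \<le> 1/x0" using x x0_pos by (intro divide_left_mono) auto
    finally show ?thesis .
  qed
  moreover have "\<bar>Sp t\<bar> \<le> 1" using bnds(8,9)[of t] by auto
  ultimately show ?thesis unfolding FF_def by linarith
qed

definition "GG t = FF t + KK/6 * ln (MM t) - 3/4 * t"
lemma dGG: "(GG has_real_derivative (Fd t + KK/2 * qq t - 3/4)) (at t)"
proof -
  have l: "((\<lambda>t. ln (MM t)) has_real_derivative inverse (MM t) * (3 * qq t * MM t)) (at t)"
    by (rule DERIV_chain2[OF DERIV_ln[OF M_pos] dMM])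
  show ?thesis unfolding GG_def[abs_def]
    by (rule deriv_eq[OF DERIV_diff[OF DERIV_add[OF dFF DERIV_cmult[OF l]] DERIV_cmult[OF DERIV_ident]]])
       (use M_pos[of t] in \<open>simp add: field_simps\<close>)
qed

lemma GG_mono: "0 \<le> t \<Longrightarrow> GG 0 \<le> GG t"
  by (rule mono_up[OF dGG]) (use Fd_lb in \<open>auto simp: qq_def algebra_simps\<close>)

lemma M_growth: "0 \<le> t \<Longrightarrow> MM t \<ge> exp ((6/KK)*(FF 0 - 1 - 1/x0) + ln (MM 0)) * exp ((9/(2*KK)) * t)"
proof -
  assume t: "0 \<le> t"
  have "GG 0 \<le> GG t" by (rule GG_mono[OF t])
  hence "FF 0 + KK/6 * ln (MM 0) \<le> FF t + KK/6 * ln (MM t) - 3/4 * t" unfolding GG_def by simp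
  hence "KK/6 * ln (MM t) \<ge> 3/4*t + FF 0 - 1 - 1/x0 + KK/6 * ln (MM 0)" using F_abs[OF t] by linarith
  hence "ln (MM t) \<ge> (6/KK)*(3/4*t + FF 0 - 1 - 1/x0 + KK/6 * ln (MM 0))" using KK_pos
    by (simp add: field_simps)
  hence "ln (MM t) \<ge> (6/KK)*(FF 0 - 1 - 1/x0) + ln (MM 0) + (9/(2*KK)) * t" using KK_pos
    by (simp add: field_simps)
  hence "exp ((6/KK)*(FF 0 - 1 - 1/x0) + ln (MM 0) + (9/(2*KK)) * t) \<le> MM t"
    using M_pos[of t] by (metis exp_le_cancel_iff exp_ln)
  thus ?thesis by (simp add: exp_add)
qed

lemma x_growth: "\<exists>X1 g. X1 > 0 \<and> g > 0 \<and> (\<forall>t\<ge>0. xx t \<ge> X1 * exp (g * t))"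
proof (intro exI conjI allI impI)
  show "6 * exp ((6/KK)*(FF 0 - 1 - 1/x0) + ln (MM 0)) > 0" by simp
  show "9/(2*KK) > 0" using KK_pos by simp
  fix t :: real assume "0 \<le> t"
  thus "6 * exp ((6/KK)*(FF 0 - 1 - 1/x0) + ln (MM 0)) * exp (9/(2*KK) * t) \<le> xx t"
    using M_growth M_le[of t] by force
qed

end



locale whs2 = whs +
  fixes X1 g :: real
  assumes X1_pos: "X1 > 0" and g_pos: "g > 0" and xg: "\<And>t. 0 \<le> t \<Longrightarrow> xx t \<ge> X1 * exp (g * t)"
begin

lemma inv_x: "0 \<le> t \<Longrightarrow> 1 / xx t \<le> exp (- g * t) / X1"
proof -
  assume t: "0 \<le> t"
  have "X1 * exp (g * t) > 0" using X1_pos by simp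
  hence "1 / xx t \<le> 1 / (X1 * exp (g * t))" using xg[OF t] by (intro divide_left_mono) auto
  also have "\<dots> = exp (- g * t) / X1" by (simp add: exp_minus field_simps)
  finally show ?thesis .
qed

lemma n_abs: "\<bar>N1 t\<bar> \<le> (2/3) / xx t"
proof -
  have "\<bar>N1 t\<bar> * xx t = ww t" using n_neg[of t] x_pos[of t] unfolding ww_def by simp
  hence "\<bar>N1 t\<bar> = ww t / xx t" using x_pos[of t] by (simp add: field_simps)
  moreover have "ww t / xx t \<le> (2/3) / xx t" using bnds(4)[of t] x_pos[of t] by (intro divide_right_mono) auto
  ultimately show ?thesis by simp
qed


lemma x_lim: "filterlim xx at_top at_top"
proof -
  have e: "filterlim (\<lambda>t. exp (g * t)) at_top at_top"
    by (rule filterlim_compose[OF exp_at_top filterlim_tendsto_pos_mult_at_top[OF tendsto_const g_pos filterlim_ident]])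
  have "filterlim (\<lambda>t. X1 * exp (g * t)) at_top at_top"
    by (rule filterlim_tendsto_pos_mult_at_top[OF tendsto_const X1_pos e])
  moreover have "eventually (\<lambda>t. X1 * exp (g * t) \<le> xx t) at_top"
    unfolding eventually_at_top_linorder using xg by blast
  ultimately show ?thesis by (rule filterlim_at_top_mono)
qed

lemma n_lim: "(N1 \<longlongrightarrow> 0) at_top"
proof -
  have "((\<lambda>t. (2/3) / xx t) \<longlongrightarrow> 0) at_top"
    by (rule tendsto_divide_0[OF tendsto_const]) (rule filterlim_at_top_imp_at_infinity[OF x_lim])
  thus ?thesis
    by (rule Lim_null_comparison[rotated]) (use n_abs in \<open>auto intro: always_eventually\<close>)
qed

lemma Sstar_ex: "\<exists>T1 c. 0 \<le> T1 \<and> c < 1 \<and> (\<forall>t\<ge>T1. Sp t \<le> c \<and> xx t \<ge> 2)"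
proof -
  have "eventually (\<lambda>t. 2 \<le> xx t) at_top" using x_lim by (simp add: filterlim_at_top)
  then obtain T0 where T0: "\<And>t. t \<ge> T0 \<Longrightarrow> xx t \<ge> 2"
    by (auto simp: eventually_at_top_linorder)
  define T1 where "T1 = max 0 T0"
  define c where "c = max (3/4) (Sp T1)"
  have c1: "c < 1" using bnds(8)[of T1] unfolding c_def by simp
  have "Sp t \<le> c" if t: "T1 \<le> t" for t
  proof (rule barrier_upper[OF dSp])
    show "Sp T1 \<le> c" unfolding c_def by simp
    show "T1 \<le> t" by (rule t)
    fix tt assume tt: "T1 \<le> tt" "Sp tt = c"
    have x2: "xx tt \<ge> 2" using T0 tt unfolding T1_def by auto
    have s34: "Sp tt \<ge> 3/4" using tt unfolding c_def by auto
    have w: "ww tt > 0" "ww tt \<le> 2/3" using w_pos bnds(4) by auto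
    have nsq: "N1 tt^2 = ww tt^2 / xx tt^2" using x_pos[of tt] unfolding ww_def by (simp add: power2_eq_square field_simps)
    have "N1 tt^2 \<le> ww tt * (2/3) / 4"
    proof -
      have "ww tt^2 \<le> ww tt * (2/3)" using w by (simp add: power2_eq_square mult_left_mono)
      moreover have "(2::real)^2 \<le> xx tt^2" using x2 by (intro power_mono) auto
      ultimately show ?thesis unfolding nsq
        by (intro frac_le) (use w in auto)
    qed
    have "0 \<le> (1+Sp tt)*YY tt^2" using bnds(9)[of tt] by (intro mult_nonneg_nonneg) auto
    hence a: "-2*(1+Sp tt)*YY tt^2 \<le> 0" by linarith
    have b: "(3 - 3/2*Sp tt)*N1 tt^2 \<le> (15/8)*N1 tt^2" using s34 by (intro mult_right_mono) auto
    have cc: "3/2*(1-2*Sp tt)*ww tt \<le> -(3/4)*ww tt" using s34 w by (intro mult_right_mono) auto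
    show "sd tt < 0" unfolding sd_def using a b cc w \<open>N1 tt^2 \<le> ww tt * (2/3) / 4\<close> by linarith
  qed
  hence "\<forall>t\<ge>T1. Sp t \<le> c \<and> xx t \<ge> 2" using T0 unfolding T1_def by auto
  moreover have "0 \<le> T1" unfolding T1_def by auto
  ultimately show ?thesis using c1 by blast
qed

end



definition "sdP s Y n w = -2*(1+s)*Y^2 + (3 - 3/2* s)*n^2 + 3/2*(1-2* s)*w"
definition "EdP s m Y n = -2*(2-2*(s^2 + m^2))*m^2 + 6*n*(m*Y) + 2*(2*(s^2 + m^2)+2* s)*Y^2"
definition "ggP s m Y iu = 2*(2*(m^2 + Y^2) - 1 + s^2)*iu^3"
definition "gdP s m Y n w iu = 2*(2*EdP s m Y n + 2* s* sdP s Y n w)*iu^3 + 6*(2*(m^2 + Y^2) - 1 + s^2)* sdP s Y n w*iu^4"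
definition Phi :: "real \<Rightarrow> real \<Rightarrow> real \<Rightarrow> real \<Rightarrow> real \<Rightarrow> real \<Rightarrow> real \<Rightarrow> real" where
  "Phi s m Y n w ix iu = -(9/2)*(m^2 + Y^2)*n*w*iu^3 - 6*w*(m*Y)*iu^2 - gdP s m Y n w iu*(m*Y)/3
     - ggP s m Y iu*(3*n*Y^2 - (2-2*(s^2 + m^2))*(m*Y) - 4*(m*Y)^2*ix)/3"

lemma Phi_cont:
  fixes f1 f2 f3 f4 f5 f6 f7 :: "'a::topological_space \<Rightarrow> real"
  assumes "continuous_on S f1" "continuous_on S f2" "continuous_on S f3" "continuous_on S f4"
    "continuous_on S f5" "continuous_on S f6" "continuous_on S f7"
  shows "continuous_on S (\<lambda>v. Phi (f1 v) (f2 v) (f3 v) (f4 v) (f5 v) (f6 v) (f7 v))"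
proof -
  have sd: "continuous_on S (\<lambda>v. sdP (f1 v) (f3 v) (f4 v) (f5 v))"
    unfolding sdP_def by (auto intro!: continuous_intros assms)
  have ed: "continuous_on S (\<lambda>v. EdP (f1 v) (f2 v) (f3 v) (f4 v))"
    unfolding EdP_def by (auto intro!: continuous_intros assms)
  have gg: "continuous_on S (\<lambda>v. ggP (f1 v) (f2 v) (f3 v) (f7 v))"
    unfolding ggP_def by (auto intro!: continuous_intros assms)
  have gd: "continuous_on S (\<lambda>v. gdP (f1 v) (f2 v) (f3 v) (f4 v) (f5 v) (f7 v))"
    unfolding gdP_def by (auto intro!: continuous_intros assms sd ed)
  show ?thesis unfolding Phi_def by (auto intro!: continuous_intros assms gg gd)
qed

context whs begin

definition "iu t = 1 / (1 - Sp t)"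
definition "ix t = 1 / xx t"
definition "QQ t = EE t * iu t^2"
definition "gg t = 2*(2*EE t - 1 + Sp t^2)*iu t^3"
definition "hh t = PP t * ix t"
definition "VV t = QQ t - gg t * hh t / 3"
definition "Ed t = 2*Sm t*md t + 2*YY t*Yd t"
definition "Qd t = Ed t * iu t^2 + 2*EE t* sd t*iu t^3"
definition "gd t = 2*(2*Ed t + 2*Sp t* sd t)*iu t^3 + 6*(2*EE t - 1 + Sp t^2)* sd t*iu t^4"
definition "hdd t = Pd t * ix t - PP t * xd t * ix t^2"
definition "Vd t = Qd t - (gd t * hh t + gg t * hdd t)/3"
definition "rho t = 3*N1 t*YY t^2*ix t - (2 - qq t)*PP t*ix t - 4*PP t^2*ix t^2"

lemma u_pos: "1 - Sp t > 0" using bnds(8)[of t] by simp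
lemma iu_rel: "(1 - Sp t) * iu t = 1" using u_pos[of t] unfolding iu_def by simp
lemma ix_rel: "xx t * ix t = 1" using x_pos[of t] unfolding ix_def by simp
lemma iu_pos: "iu t > 0" using u_pos[of t] unfolding iu_def by simp
lemma ix_pos: "ix t > 0" using x_pos[of t] unfolding ix_def by simp

lemma dEE: "(EE has_real_derivative Ed t) (at t)"
  unfolding EE_def[abs_def] Ed_def
  by (rule deriv_eq[OF DERIV_add[OF DERIV_power[OF dSm] DERIV_power[OF dYY]]]) simp

lemma diu: "(iu has_real_derivative sd t * iu t^2) (at t)"
  unfolding iu_def[abs_def]
  by (rule deriv_eq[OF DERIV_divide[OF DERIV_const DERIV_diff[OF DERIV_const dSp]]])
     (use u_pos[of t] in \<open>auto simp: power2_eq_square\<close>)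

lemma dix: "(ix has_real_derivative - xd t * ix t^2) (at t)"
  unfolding ix_def[abs_def]
  by (rule deriv_eq[OF DERIV_divide[OF DERIV_const dxx]])
     (use x_pos[of t] in \<open>auto simp: power2_eq_square\<close>)

lemma dQQ: "(QQ has_real_derivative Qd t) (at t)"
  unfolding QQ_def[abs_def] Qd_def
  by (rule deriv_eq[OF DERIV_mult[OF dEE DERIV_power[OF diu]]]) (simp add: algebra_simps power2_eq_square power3_eq_cube)

lemma dgg: "(gg has_real_derivative gd t) (at t)"
  unfolding gg_def[abs_def] gd_def
  by (rule deriv_eq[OF DERIV_mult[OF DERIV_cmult[OF DERIV_add[OF DERIV_diff[OF DERIV_cmult[OF dEE] DERIV_const] DERIV_power[OF dSp]]] DERIV_power[OF diu]]])
     (simp add: algebra_simps power2_eq_square power3_eq_cube power4_eq_xxxx)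

lemma dhh: "(hh has_real_derivative hdd t) (at t)"
  unfolding hh_def[abs_def] hdd_def
  by (rule deriv_eq[OF DERIV_mult[OF dPP dix]]) (simp add: algebra_simps)

lemma dVV: "(VV has_real_derivative Vd t) (at t)"
  unfolding VV_def[abs_def] Vd_def
  by (rule deriv_eq[OF DERIV_diff[OF dQQ DERIV_divide[OF DERIV_mult[OF dgg dhh] DERIV_const]]]) (simp only: mult_zero_right diff_zero, simp add: field_simps)

lemma Ed_alt: "Ed t = -2*(2 - qq t)*Sm t^2 + 6*N1 t*PP t + 2*(qq t + 2*Sp t)*YY t^2"
  unfolding Ed_def md_def Yd_def PP_def by algebra

lemma Qd_alt: "Qd t = -2*EE t^2*iu t^3 + 9/2*EE t*N1 t^2*iu t^3 + gg t*DD t + 6*N1 t*PP t*iu t^2"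
  using iu_rel[of t] con[of t] unfolding Qd_def Ed_alt sd_def gg_def EE_def DD_def PP_def qq_def
  by algebra

lemma hdd_alt: "hdd t = 3*DD t + rho t"
  using ix_rel[of t] unfolding hdd_def rho_def Pd_def md_def Yd_def xd_def DD_def PP_def qq_def
  by algebra

lemma Vd_alt: "Vd t = -2*EE t^2*iu t^3 + ix t * Phi (Sp t) (Sm t) (YY t) (N1 t) (ww t) (ix t) (iu t)"
proof -
  have w: "ww t * ix t = - N1 t" using ix_rel[of t] unfolding ww_def by algebra
  show ?thesis
    unfolding Vd_def Qd_alt hdd_alt Phi_def gdP_def ggP_def EdP_def sdP_def gd_def Ed_alt gg_def rho_def hh_def
      EE_def PP_def qq_def sd_def
    using w by algebra
qed

end

lemma compact_bound:
  fixes f :: "'a::topological_space \<Rightarrow> real"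
  assumes "continuous_on K f" "compact K"
  shows "\<exists>C. \<forall>v\<in>K. \<bar>f v\<bar> \<le> C"
proof -
  have "compact (f ` K)" by (rule compact_continuous_image[OF assms])
  hence "bounded (f ` K)" by (rule compact_imp_bounded)
  then obtain C where "\<forall>y\<in>f ` K. norm y \<le> C" unfolding bounded_iff by blast
  thus ?thesis by auto
qed

lemma Phi_bound:
  "\<exists>C. \<forall>s m Y n w ix iu. \<bar>s\<bar> \<le> 1 \<longrightarrow> \<bar>m\<bar> \<le> 1 \<longrightarrow> \<bar>Y\<bar> \<le> 1 \<longrightarrow> \<bar>n\<bar> \<le> 2 \<longrightarrow> \<bar>w\<bar> \<le> 1
     \<longrightarrow> \<bar>ix\<bar> \<le> A \<longrightarrow> \<bar>iu\<bar> \<le> B \<longrightarrow> \<bar>Phi s m Y n w ix iu\<bar> \<le> C"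
proof -
  let ?K = "{-1..1::real} \<times> {-1..1::real} \<times> {-1..1::real} \<times> {-2..2::real} \<times> {-1..1::real} \<times> {-A..A} \<times> {-B..B}"
  have "continuous_on ?K (\<lambda>v. Phi (fst v) (fst (snd v)) (fst (snd (snd v))) (fst (snd (snd (snd v))))
      (fst (snd (snd (snd (snd v))))) (fst (snd (snd (snd (snd (snd v)))))) (snd (snd (snd (snd (snd (snd v)))))))"
    by (auto intro!: Phi_cont continuous_intros)
  moreover have "compact ?K" by (intro compact_Times compact_Icc)
  ultimately obtain C where C: "\<forall>v\<in>?K. \<bar>Phi (fst v) (fst (snd v)) (fst (snd (snd v))) (fst (snd (snd (snd v))))
      (fst (snd (snd (snd (snd v))))) (fst (snd (snd (snd (snd (snd v)))))) (snd (snd (snd (snd (snd (snd v))))))\<bar> \<le> C"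
    using compact_bound by blast
  show ?thesis
  proof (intro exI allI impI)
    fix s m Y n w ix iu :: real
    assume "\<bar>s\<bar> \<le> 1" "\<bar>m\<bar> \<le> 1" "\<bar>Y\<bar> \<le> 1" "\<bar>n\<bar> \<le> 2" "\<bar>w\<bar> \<le> 1" "\<bar>ix\<bar> \<le> A" "\<bar>iu\<bar> \<le> B"
    hence "(s, m, Y, n, w, ix, iu) \<in> ?K" by (auto simp: abs_le_iff)
    from C[rule_format, OF this] show "\<bar>Phi s m Y n w ix iu\<bar> \<le> C" by simp
  qed
qed




locale whs3 = whs2 +
  fixes T1 c :: real
  assumes T1_nn: "0 \<le> T1" and c_lt: "c < 1" and Tc: "\<And>t. T1 \<le> t \<Longrightarrow> Sp t \<le> c \<and> xx t \<ge> 2"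
begin

lemma iu_le: "T1 \<le> t \<Longrightarrow> iu t \<le> 1/(1-c)"
proof -
  assume t: "T1 \<le> t"
  have "1 - c \<le> 1 - Sp t" using Tc[OF t] by simp
  thus ?thesis unfolding iu_def using c_lt by (intro divide_left_mono) auto
qed

lemma ix_le: "0 \<le> t \<Longrightarrow> ix t \<le> 1/x0"
  unfolding ix_def using x_lb[of t] x0_pos by (intro divide_left_mono) auto

lemma ix_exp: "0 \<le> t \<Longrightarrow> ix t \<le> exp (- g * t) / X1"
  unfolding ix_def by (rule inv_x)

lemma n_abs2: "\<bar>N1 t\<bar> \<le> 2"
proof -
  have "N1 t^2 \<le> 2^2" using bnds(5)[of t] by simp
  thus ?thesis using power2_le_iff_abs_le[of 2 "N1 t"] by simp
qed

lemma Vd_bound: "\<exists>C. \<forall>t\<ge>T1. Vd t \<le> -2*EE t^2*iu t^3 + C * ix t"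
proof -
  obtain C where C: "\<forall>s m Y n w ix iu. \<bar>s\<bar> \<le> 1 \<longrightarrow> \<bar>m\<bar> \<le> 1 \<longrightarrow> \<bar>Y\<bar> \<le> 1 \<longrightarrow> \<bar>n\<bar> \<le> 2 \<longrightarrow> \<bar>w\<bar> \<le> 1
     \<longrightarrow> \<bar>ix\<bar> \<le> 1/x0 \<longrightarrow> \<bar>iu\<bar> \<le> 1/(1-c) \<longrightarrow> \<bar>Phi s m Y n w ix iu\<bar> \<le> C"
    using Phi_bound by blast
  show ?thesis
  proof (intro exI allI impI)
    fix t assume t: "T1 \<le> t"
    have "\<bar>Phi (Sp t) (Sm t) (YY t) (N1 t) (ww t) (ix t) (iu t)\<bar> \<le> C"
      using C[rule_format, of "Sp t" "Sm t" "YY t" "N1 t" "ww t" "ix t" "iu t"]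
        bnds(8,9)[of t] P_abs(3,4)[of t] n_abs2[of t] bnds(4)[of t] w_pos[of t]
        ix_le[of t] ix_pos[of t] iu_le[OF t] iu_pos[of t] t T1_nn by auto
    hence "ix t * Phi (Sp t) (Sm t) (YY t) (N1 t) (ww t) (ix t) (iu t) \<le> C * ix t"
      using ix_pos[of t] by (simp add: mult.commute mult_right_mono abs_le_iff)
    thus "Vd t \<le> -2*EE t^2*iu t^3 + C * ix t" unfolding Vd_alt by linarith
  qed
qed

lemma VQ: "\<bar>VV t - QQ t\<bar> \<le> ix t * (2/(3*(1-c)^3))" if t: "T1 \<le> t"
proof -
  have "VV t - QQ t = - (ix t * (gg t * PP t)/3)" unfolding VV_def hh_def by (simp add: algebra_simps)
  hence e: "\<bar>VV t - QQ t\<bar> = ix t * (\<bar>gg t\<bar> * \<bar>PP t\<bar>)/3" using ix_pos[of t] by (simp add: abs_mult)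
  have z: "0 \<le> EE t" "0 \<le> Sp t^2" unfolding EE_def by auto
  have a1: "2*EE t - 1 + Sp t^2 \<le> 2" "-(2*EE t - 1 + Sp t^2) \<le> 2"
    using bnds(1,7)[of t] z by linarith+
  hence a: "\<bar>2*EE t - 1 + Sp t^2\<bar> \<le> 2" by (simp only: abs_le_iff)
  have b: "iu t^3 \<le> (1/(1-c))^3" using iu_le[OF t] iu_pos[of t] by (intro power_mono) auto
  have "\<bar>gg t\<bar> = 2*\<bar>2*EE t - 1 + Sp t^2\<bar>*iu t^3" unfolding gg_def abs_mult using iu_pos[of t] by simp
  also have "\<dots> \<le> 2*2*(1/(1-c))^3" using a b iu_pos[of t] by (intro mult_mono) auto
  finally have gb: "\<bar>gg t\<bar> \<le> 4/(1-c)^3" by (simp add: power_divide)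
  have "\<bar>gg t\<bar> * \<bar>PP t\<bar> \<le> 4/(1-c)^3 * (1/2)" using gb P_abs(2)[of t] c_lt by (intro mult_mono) auto
  hence "ix t * (\<bar>gg t\<bar> * \<bar>PP t\<bar>)/3 \<le> ix t * (4/(1-c)^3 * (1/2))/3"
    using ix_pos[of t] by (intro divide_right_mono mult_left_mono) auto
  thus ?thesis unfolding e by (simp add: field_simps)
qed

lemma EQ: "EE t^2 * iu t^3 = QQ t^2 * (1 - Sp t)"
  using iu_rel[of t] unfolding QQ_def by algebra

lemma QQ_nn: "QQ t \<ge> 0" unfolding QQ_def EE_def by simp

lemma QQ_lim: "(QQ \<longlongrightarrow> 0) at_top"
proof -
  obtain C where C: "\<And>t. T1 \<le> t \<Longrightarrow> Vd t \<le> -2*EE t^2*iu t^3 + C * ix t" using Vd_bound by blast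
  define C' where "C' = max C 0"
  have C': "\<And>t. T1 \<le> t \<Longrightarrow> Vd t \<le> -2*EE t^2*iu t^3 + C' * (exp (- g * t) / X1)"
  proof -
    fix t assume t: "T1 \<le> t"
    have "C * ix t \<le> C' * ix t" using ix_pos[of t] unfolding C'_def by (intro mult_right_mono) auto
    also have "\<dots> \<le> C' * (exp (- g * t) / X1)" using ix_exp[of t] t T1_nn unfolding C'_def
      by (intro mult_left_mono) auto
    finally show "Vd t \<le> -2*EE t^2*iu t^3 + C' * (exp (- g * t) / X1)" using C[OF t] by linarith
  qed
  define W where "W t = VV t + C' / (X1 * g) * exp (- g * t)" for t
  define Wd where "Wd t = Vd t - C' * (exp (- g * t) / X1)" for t
  have dW: "(W has_real_derivative Wd t) (at t)" for t
    unfolding W_def[abs_def] Wd_def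
    by (rule deriv_eq[OF DERIV_add[OF dVV DERIV_cmult[OF DERIV_chain2[OF DERIV_exp DERIV_cmult[OF DERIV_ident]]]]])
       (use X1_pos g_pos in \<open>simp add: field_simps\<close>)
  have bW: "Wd t \<le> - (2*(1-c)) * QQ t ^ 2" if t: "T1 \<le> t" for t
  proof -
    have "Wd t \<le> -2*EE t^2*iu t^3" using C'[OF t] unfolding Wd_def by linarith
    also have "\<dots> = -2 * QQ t^2 * (1 - Sp t)" using EQ[of t] by simp
    also have "\<dots> \<le> -2 * QQ t^2 * (1 - c)" using Tc[OF t] by (intro mult_left_mono_neg) auto
    also have "\<dots> = - (2*(1-c)) * QQ t ^ 2" by (simp add: algebra_simps)
    finally show ?thesis .
  qed
  have lim: "((\<lambda>t. W t - QQ t) \<longlongrightarrow> 0) at_top"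
  proof -
    have e1: "((\<lambda>t. C' / (X1 * g) * exp (- g * t)) \<longlongrightarrow> 0) at_top"
      using g_pos by (intro tendsto_mult_right_zero filterlim_compose[OF exp_at_bot]
          filterlim_tendsto_neg_mult_at_bot[OF tendsto_const _ filterlim_ident]) auto
    have ixl: "(ix \<longlongrightarrow> 0) at_top" unfolding ix_def[abs_def]
      by (rule tendsto_divide_0[OF tendsto_const filterlim_at_top_imp_at_infinity[OF x_lim]])
    have e2: "((\<lambda>t. VV t - QQ t) \<longlongrightarrow> 0) at_top"
    proof (rule Lim_null_comparison)
      show "eventually (\<lambda>t. norm (VV t - QQ t) \<le> ix t * (2/(3*(1-c)^3))) at_top"
        unfolding eventually_at_top_linorder using VQ by auto
      show "((\<lambda>t. ix t * (2/(3*(1-c)^3))) \<longlongrightarrow> 0) at_top"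
        by (rule tendsto_mult_left_zero[OF ixl])
    qed
    have "((\<lambda>t. (VV t - QQ t) + C' / (X1 * g) * exp (- g * t)) \<longlongrightarrow> 0 + 0) at_top"
      by (rule tendsto_add[OF e2 e1])
    thus ?thesis unfolding W_def by (simp add: algebra_simps)
  qed
  show ?thesis
    by (rule decay[OF dW bW _ QQ_nn lim]) (use c_lt in auto)
qed

lemma EE_lim: "(EE \<longlongrightarrow> 0) at_top"
proof (rule Lim_null_comparison[OF _ tendsto_mult_left_zero[OF QQ_lim, of 4]])
  show "eventually (\<lambda>t. norm (EE t) \<le> QQ t * 4) at_top"
  proof (rule always_eventually, rule allI)
    fix t
    have "EE t = QQ t * (1 - Sp t)^2" using iu_rel[of t] unfolding QQ_def by algebra
    moreover have "(1 - Sp t)^2 \<le> 2^2" using bnds(8,9)[of t] by (intro power_mono) auto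
    moreover have "EE t \<ge> 0" unfolding EE_def by simp
    ultimately show "norm (EE t) \<le> QQ t * 4" using QQ_nn[of t] by (simp add: mult_left_mono)
  qed
qed

end



lemma reach_below:
  fixes f f' :: "real \<Rightarrow> real"
  assumes d: "\<And>t. (f has_real_derivative f' t) (at t)"
    and dec: "\<And>t. T \<le> t \<Longrightarrow> f t \<ge> a \<Longrightarrow> f' t \<le> - dl" and dl: "dl > 0"
  shows "\<exists>T'. \<forall>t\<ge>T'. f t \<le> a"
proof -
  define L where "L = \<bar>f T - a\<bar> / dl + 1"
  have L: "L > 0" "dl * L > \<bar>f T - a\<bar>" using dl unfolding L_def by (auto simp: field_simps)
  have "\<exists>t1\<ge>T. f t1 \<le> a"
  proof (rule ccontr)
    assume "\<not> ?thesis"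
    hence big: "\<And>t. T \<le> t \<Longrightarrow> f t > a" by force
    have "(\<lambda>t. f t + dl * t) (T + L) \<le> (\<lambda>t. f t + dl * t) T"
    proof (rule mono_down[where f = "\<lambda>t. f t + dl * t" and f' = "\<lambda>t. f' t + dl"])
      fix t show "((\<lambda>t. f t + dl * t) has_real_derivative f' t + dl) (at t)"
        by (rule deriv_eq_aux[OF DERIV_add[OF d DERIV_cmult[OF DERIV_ident]]]) simp
    next
      show "T \<le> T + L" using L by simp
    next
      fix t assume "T \<le> t" "t \<le> T + L"
      thus "f' t + dl \<le> 0" using dec[of t] big[of t] by force
    qed
    hence "f (T + L) \<le> f T - dl * L" by (simp add: algebra_simps)
    hence "f (T + L) < a" using L by linarith
    thus False using big[of "T + L"] L by simp
  qed
  then obtain t1 where t1: "T \<le> t1" "f t1 \<le> a" by blast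
  have "\<forall>t\<ge>t1. f t \<le> a"
  proof (intro allI impI)
    fix t assume "t1 \<le> t"
    show "f t \<le> a"
    proof (rule barrier_upper[OF d t1(2) _ \<open>t1 \<le> t\<close>])
      fix s assume "t1 \<le> s" "f s = a"
      hence "f' s \<le> - dl" using dec[of s] t1 by auto
      thus "f' s < 0" using dl by linarith
    qed
  qed
  thus ?thesis by blast
qed

lemma reach_above:
  fixes f F Fd :: "real \<Rightarrow> real"
  assumes d: "\<And>t. (F has_real_derivative Fd t) (at t)"
    and inc: "\<And>t. T \<le> t \<Longrightarrow> f t \<le> a \<Longrightarrow> Fd t \<ge> dl" and dl: "dl > 0"
    and bd: "\<And>t. F t \<le> B"
  shows "\<exists>t1\<ge>T. f t1 \<ge> a"
proof (rule ccontr)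
  assume "\<not> ?thesis"
  hence small: "\<And>t. T \<le> t \<Longrightarrow> f t < a" by force
  define L where "L = \<bar>B - F T\<bar> / dl + 1"
  have L: "L > 0" "dl * L > \<bar>B - F T\<bar>" using dl unfolding L_def by (auto simp: field_simps)
  have "(\<lambda>t. F t - dl * t) T \<le> (\<lambda>t. F t - dl * t) (T + L)"
  proof (rule mono_up[where f = "\<lambda>t. F t - dl * t" and f' = "\<lambda>t. Fd t - dl"])
    fix t show "((\<lambda>t. F t - dl * t) has_real_derivative Fd t - dl) (at t)"
      by (rule deriv_eq_aux[OF DERIV_diff[OF d DERIV_cmult[OF DERIV_ident]]]) simp
  next
    show "T \<le> T + L" using L by simp
  next
    fix t assume "T \<le> t" "t \<le> T + L"
    thus "0 \<le> Fd t - dl" using inc[of t] small[of t] by force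
  qed
  hence "F (T + L) \<ge> F T + dl * L" by (simp add: algebra_simps)
  hence "F (T + L) > B" using L by linarith
  thus False using bd[of "T + L"] by simp
qed

context whs begin

definition "wd t = (2*qq t - 2*Sp t)*ww t - 4*N1 t*PP t"
lemma dww: "(ww has_real_derivative wd t) (at t)"
  unfolding ww_def[abs_def] wd_def
  by (rule deriv_eq[OF DERIV_mult[OF DERIV_minus[OF dN1] dxx]]) (simp add: xd_def ww_def algebra_simps)

definition "LL t = ln (ww t) + 2 * Sp t"
definition "Ld t = wd t / ww t + 2 * sd t"
lemma dLL: "(LL has_real_derivative Ld t) (at t)"
  unfolding LL_def[abs_def] Ld_def
  by (rule deriv_eq[OF DERIV_add[OF DERIV_chain2[OF DERIV_ln[OF w_pos] dww] DERIV_cmult[OF dSp]]])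
     (simp add: field_simps)

lemma Ld_alt: "Ld t = (1 - 2*Sp t)*(2 - 2*Sp t^2 - 2*Sp t) + (2 + 4*Sp t)*Sm t^2 - 6*YY t^2
   + 9/2*N1 t^2 + 4*PP t*ix t"
proof -
  have "wd t = ww t * (2*qq t - 2*Sp t + 4*PP t * ix t)"
    using x_pos[of t] unfolding wd_def ww_def ix_def by (simp add: field_simps)
  hence a: "wd t / ww t = 2*qq t - 2*Sp t + 4*PP t * ix t"
    using w_pos[of t] by simp
  show ?thesis unfolding Ld_def a using con[of t] unfolding sd_def qq_def by algebra
qed

lemma LL_bd: "LL t \<le> 2"
proof -
  have "ln (ww t) \<le> ww t - 1" using w_pos[of t] by (rule ln_le_minus_one)
  thus ?thesis unfolding LL_def using bnds(4,8)[of t] by linarith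
qed

end

context whs3 begin

lemma ix_lim: "(ix \<longlongrightarrow> 0) at_top" unfolding ix_def[abs_def]
  by (rule tendsto_divide_0[OF tendsto_const filterlim_at_top_imp_at_infinity[OF x_lim]])

lemma ev_small: "e > 0 \<Longrightarrow> \<exists>T. \<forall>t\<ge>T. EE t \<le> e \<and> N1 t^2 \<le> e \<and> ix t \<le> e"
proof -
  assume e: "e > 0"
  have "eventually (\<lambda>t. dist (EE t) 0 < e) at_top" by (rule tendstoD[OF EE_lim e])
  moreover have "eventually (\<lambda>t. dist (N1 t) 0 < min 1 e) at_top" by (rule tendstoD[OF n_lim]) (use e in auto)
  moreover have "eventually (\<lambda>t. dist (ix t) 0 < e) at_top" by (rule tendstoD[OF ix_lim e])
  ultimately have "eventually (\<lambda>t. EE t \<le> e \<and> N1 t^2 \<le> e \<and> ix t \<le> e) at_top"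
  proof eventually_elim
    case (elim t)
    have "\<bar>N1 t\<bar> < min 1 e" using elim(2) by simp
    hence "\<bar>N1 t\<bar> * \<bar>N1 t\<bar> \<le> 1 * e" by (intro mult_mono) auto
    hence "N1 t^2 \<le> e" by (simp add: power2_eq_square abs_mult[symmetric])
    thus ?case using elim(1,3) by (smt (verit) dist_real_def)
  qed
  thus ?thesis by (simp add: eventually_at_top_linorder)
qed

lemma upper: "0 < e \<Longrightarrow> e \<le> 1/4 \<Longrightarrow> \<exists>T. \<forall>t\<ge>T. Sp t \<le> 1/2 + e"
proof -
  assume e: "0 < e" "e \<le> 1/4"
  define M where "M = max c (1/2)"
  define k where "k = 1 - M^2"
  have k: "k > 0" using c_lt unfolding k_def M_def by (simp add: power_less_one_iff abs_less_iff max_def)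
  obtain T where T: "\<And>t. T \<le> t \<Longrightarrow> EE t \<le> min (k/4) (e*k/12) \<and> N1 t^2 \<le> min (k/4) (e*k/12) \<and> ix t \<le> min (k/4) (e*k/12)"
    using ev_small[of "min (k/4) (e*k/12)"] k e by auto
  show ?thesis
  proof (rule reach_below[OF dSp])
    fix t assume t: "max T T1 \<le> t" "Sp t \<ge> 1/2 + e"
    have ts: "EE t \<le> k/4" "N1 t^2 \<le> k/4" "N1 t^2 \<le> e*k/12" using T[of t] t by auto
    have sc: "Sp t \<le> M" using Tc[of t] t unfolding M_def by auto
    have "Sp t^2 \<le> M^2" using sc t e by (intro power_mono) auto
    hence "3/2 * ww t \<ge> k/2"
      using con[of t] ts(1,2) zero_le_power2[of "Sm t"] zero_le_power2[of "YY t"] zero_le_power2[of "N1 t"] k k_def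
      unfolding EE_def by linarith
    hence w: "ww t \<ge> k/3" by simp
    have "0 \<le> (1+Sp t)*YY t^2" using bnds(9)[of t] by (intro mult_nonneg_nonneg) auto
    hence a: "-2*(1+Sp t)*YY t^2 \<le> 0" by linarith
    have b: "(3 - 3/2*Sp t)*N1 t^2 \<le> 3*N1 t^2" using t e by (intro mult_right_mono) auto
    have cc: "3/2*(1-2*Sp t)*ww t \<le> -3*e*ww t" using t w_pos[of t] by (intro mult_right_mono) auto
    have "-3*e*ww t \<le> -3*e*(k/3)" using w e by simp
    moreover have "-3*e*(k/3) = -(e*k)" by simp
    moreover have "e*k > 0" using e k by simp
    ultimately show "sd t \<le> - (e*k/2)" unfolding sd_def using a b cc ts(3) by linarith
  qed (use e k in auto)
qed

lemma lower: "0 < e \<Longrightarrow> e \<le> 1/4 \<Longrightarrow> \<exists>T. \<forall>t\<ge>T. Sp t \<ge> 1/2 - e"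
proof -
  assume e: "0 < e" "e \<le> 1/4"
  obtain T where T: "\<And>t. T \<le> t \<Longrightarrow> EE t \<le> e/16 \<and> N1 t^2 \<le> e/16 \<and> ix t \<le> e/16"
    using ev_small[of "e/16"] e by auto
  obtain t1 where t1: "T \<le> t1" "Sp t1 \<ge> 1/2 - e"
  proof -
    have "\<exists>t1\<ge>T. Sp t1 \<ge> 1/2 - e"
    proof (rule reach_above[OF dLL _ _ LL_bd])
      fix t assume t: "T \<le> t" "Sp t \<le> 1/2 - e"
      have ts: "EE t \<le> e/16" "ix t \<le> e/16" using T[OF t(1)] by auto
      have s1: "Sp t \<ge> -1" using bnds(9) by auto
      have p1: "2 - 2*Sp t^2 - 2*Sp t \<ge> 1/2"
      proof -
        have "(1/2 - Sp t) * (Sp t + 3/2) \<ge> 0" using t s1 e by (intro mult_nonneg_nonneg) auto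
        thus ?thesis by (simp add: algebra_simps power2_eq_square)
      qed
      have "(1 - 2*Sp t)*(2 - 2*Sp t^2 - 2*Sp t) \<ge> (2*e)*(1/2)" using t p1 e by (intro mult_mono) auto
      moreover have "(2 + 4*Sp t)*Sm t^2 \<ge> -2*Sm t^2" using s1 by (intro mult_right_mono) auto
      moreover have "\<bar>4*PP t*ix t\<bar> \<le> 4*(1/2)*(e/16)" unfolding abs_mult using P_abs(2)[of t] ts ix_pos[of t]
        by (intro mult_mono) auto
      moreover have "9/2*N1 t^2 \<ge> 0" by simp
      ultimately show "Ld t \<ge> e/2" unfolding Ld_alt using ts zero_le_power2[of "Sm t"] zero_le_power2[of "YY t"]
        unfolding EE_def abs_le_iff by linarith
    qed (use e in auto)
    thus ?thesis using that by blast
  qed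
  have "\<forall>t\<ge>t1. Sp t \<ge> 1/2 - e"
  proof (intro allI impI)
    fix t assume tt: "t1 \<le> t"
    show "Sp t \<ge> 1/2 - e"
    proof (rule barrier_lower[OF dSp t1(2) _ tt])
      fix s assume s: "t1 \<le> s" "Sp s = 1/2 - e"
      have ts: "EE s \<le> e/16" "N1 s^2 \<le> e/16" using T[of s] t1 s by auto
      have "Sp s^2 \<le> 1/4"
      proof -
        have "\<bar>Sp s\<bar> \<le> 1/2" using s e by auto
        hence "\<bar>Sp s\<bar>^2 \<le> (1/2)^2" by (intro power_mono) auto
        moreover have "(1/2::real)^2 = 1/4" "\<bar>Sp s\<bar>^2 = Sp s^2" by (simp_all add: power2_eq_square)
        ultimately show ?thesis by linarith
      qed
      hence "3/2 * ww s \<ge> 1/2"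
        using con[of s] ts e zero_le_power2[of "Sm s"] zero_le_power2[of "YY s"] unfolding EE_def by linarith
      hence w: "ww s \<ge> 1/3" by simp
      have a: "-2*(1+Sp s)*YY s^2 \<ge> -3*YY s^2" using s e by (intro mult_right_mono) auto
      have b: "(3 - 3/2*Sp s)*N1 s^2 \<ge> 0" using s e by (intro mult_nonneg_nonneg) auto
      have "1 - 2*Sp s = 2*e" using s by simp
      hence "3/2*(1-2*Sp s)*ww s = 3*e*ww s" by simp
      moreover have "3*e*ww s \<ge> 3*e*(1/3)" using w e by (intro mult_left_mono) auto
      ultimately have cc: "3/2*(1-2*Sp s)*ww s \<ge> e" by linarith
      show "sd s > 0" unfolding sd_def using a b cc ts e zero_le_power2[of "Sm s"] unfolding EE_def by linarith
    qed
  qed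
  thus ?thesis by blast
qed

end



context whs3 begin

lemma Sp_lim: "(Sp \<longlongrightarrow> 1/2) at_top"
proof (rule tendstoI)
  fix ep :: real assume ep: "ep > 0"
  define e where "e = min (ep/2) (1/4)"
  have e: "0 < e" "e \<le> 1/4" "e < ep" using ep unfolding e_def by auto
  obtain Ta where Ta: "\<And>t. t \<ge> Ta \<Longrightarrow> Sp t \<le> 1/2 + e" using upper[OF e(1,2)] by blast
  obtain Tb where Tb: "\<And>t. t \<ge> Tb \<Longrightarrow> Sp t \<ge> 1/2 - e" using lower[OF e(1,2)] by blast
  show "eventually (\<lambda>t. dist (Sp t) (1/2) < ep) at_top"
    unfolding eventually_at_top_linorder dist_real_def
  proof (intro exI allI impI)
    fix t assume "max Ta Tb \<le> t"
    thus "\<bar>Sp t - 1/2\<bar> < ep" using Ta[of t] Tb[of t] e by auto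
  qed
qed

lemma sqrt_E_lim: "((\<lambda>t. sqrt (4 * EE t)) \<longlongrightarrow> 0) at_top"
  using tendsto_real_sqrt[OF tendsto_mult_right_zero[OF EE_lim, of 4]] by simp

lemma Sm_lim: "(Sm \<longlongrightarrow> 0) at_top"
proof (rule Lim_null_comparison[OF _ sqrt_E_lim])
  show "eventually (\<lambda>t. norm (Sm t) \<le> sqrt (4 * EE t)) at_top"
  proof (rule always_eventually, rule allI)
    fix t
    have "Sm t^2 \<le> 4 * EE t" unfolding EE_def by simp
    hence "sqrt (Sm t^2) \<le> sqrt (4 * EE t)" by (rule real_sqrt_le_mono)
    thus "norm (Sm t) \<le> sqrt (4 * EE t)" by simp
  qed
qed

lemma yy_lim: "(yy \<longlongrightarrow> 0) at_top"
proof (rule Lim_null_comparison[OF _ sqrt_E_lim])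
  show "eventually (\<lambda>t. norm (yy t) \<le> sqrt (4 * EE t)) at_top"
  proof (rule always_eventually, rule allI)
    fix t
    have "yy t^2 \<le> 4 * EE t" unfolding EE_def YYsq by simp
    hence "sqrt (yy t^2) \<le> sqrt (4 * EE t)" by (rule real_sqrt_le_mono)
    thus "norm (yy t) \<le> sqrt (4 * EE t)" by simp
  qed
qed

lemma ww_lim: "(ww \<longlongrightarrow> 1/2) at_top"
proof -
  have e: "ww t = 2/3 * (1 - Sp t^2 - EE t - 3/4 * N1 t^2)" for t
    using con[of t] unfolding EE_def by simp
  have "((\<lambda>t. 2/3 * (1 - Sp t^2 - EE t - 3/4 * N1 t^2)) \<longlongrightarrow> 2/3 * (1 - (1/2)^2 - 0 - 3/4 * 0^2)) at_top"
    by (intro tendsto_intros Sp_lim EE_lim n_lim)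
  moreover have v: "2/3 * (1 - (1/2)^2 - 0 - 3/4 * 0^2) = (1/2::real)" by (simp add: power2_eq_square)
  ultimately show ?thesis unfolding e[abs_def] v by simp
qed

lemma yy_abs: "\<bar>yy t\<bar> \<le> 2"
proof -
  have "yy t^2 \<le> 2^2" using bnds(3)[of t] unfolding YYsq by simp
  thus ?thesis using power2_le_iff_abs_le[of 2 "yy t"] by simp
qed

lemma N2_lim: "filterlim N2 at_top at_top" and N3_lim: "filterlim N3 at_top at_top"
proof -
  have f: "filterlim (\<lambda>t. -1 + 1/2 * xx t) at_top at_top"
    by (rule filterlim_tendsto_add_at_top[OF tendsto_const filterlim_tendsto_pos_mult_at_top[OF tendsto_const _ x_lim]]) simp
  show "filterlim N2 at_top at_top"
  proof (rule filterlim_at_top_mono[OF f always_eventually], rule allI)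
    fix t show "-1 + 1/2 * xx t \<le> N2 t" using yy_abs[of t] unfolding xx_def yy_def abs_le_iff by (simp add: field_simps)
  qed
  show "filterlim N3 at_top at_top"
  proof (rule filterlim_at_top_mono[OF f always_eventually], rule allI)
    fix t show "-1 + 1/2 * xx t \<le> N3 t" using yy_abs[of t] unfolding xx_def yy_def abs_le_iff by (simp add: field_simps)
  qed
qed

lemma final:
  "(N1 \<longlongrightarrow> 0) at_top \<and>
    filterlim N2 at_top at_top \<and>
    filterlim N3 at_top at_top \<and>
    (Sp \<longlongrightarrow> 1/2) at_top \<and>
    (Sm \<longlongrightarrow> 0) at_top \<and>
    ((\<lambda>t. N1 t * (N2 t + N3 t)) \<longlongrightarrow> -1/2) at_top \<and>
    ((\<lambda>t. N2 t - N3 t) \<longlongrightarrow> 0) at_top"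
proof (intro conjI)
  show "((\<lambda>t. N1 t * (N2 t + N3 t)) \<longlongrightarrow> -1/2) at_top"
  proof -
    have "((\<lambda>t. - ww t) \<longlongrightarrow> - (1/2)) at_top" by (rule tendsto_minus[OF ww_lim])
    thus ?thesis unfolding ww_def xx_def by simp
  qed
  show "((\<lambda>t. N2 t - N3 t) \<longlongrightarrow> 0) at_top" using yy_lim unfolding yy_def[abs_def] .
qed (use n_lim N2_lim N3_lim Sp_lim Sm_lim in auto)

end

theorem mainTheorem1:
  fixes N1 N2 N3 Sp Sm :: "real \<Rightarrow> real"
  assumes sol: "wh_solution N1 N2 N3 Sp Sm"
    and cons: "\<forall>t. wh_constraint (N1 t) (N2 t) (N3 t) (Sp t) (Sm t)"
    and sign: "\<forall>t. N1 t < 0 \<and> N2 t > 0 \<and> N3 t > 0"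
  shows "(N1 \<longlongrightarrow> 0) at_top \<and>
    filterlim N2 at_top at_top \<and>
    filterlim N3 at_top at_top \<and>
    (Sp \<longlongrightarrow> 1/2) at_top \<and>
    (Sm \<longlongrightarrow> 0) at_top \<and>
    ((\<lambda>t. N1 t * (N2 t + N3 t)) \<longlongrightarrow> -1/2) at_top \<and>
    ((\<lambda>t. N2 t - N3 t) \<longlongrightarrow> 0) at_top"
proof -
  interpret W: whs N1 N2 N3 Sp Sm by unfold_locales (use sol cons sign in auto)
  obtain X1 g where Xg: "X1 > 0" "g > 0" "\<forall>t\<ge>0. W.xx t \<ge> X1 * exp (g * t)"
    using W.x_growth by blast
  interpret W2: whs2 N1 N2 N3 Sp Sm X1 g by unfold_locales (use Xg in auto)
  obtain T1 c where Tc: "0 \<le> T1" "c < 1" "\<forall>t\<ge>T1. Sp t \<le> c \<and> W.xx t \<ge> 2"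
    using W2.Sstar_ex by blast
  interpret W3: whs3 N1 N2 N3 Sp Sm X1 g T1 c by unfold_locales (use Tc in auto)
  show ?thesis by (rule W3.final)
qed


end
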